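(* Let $(X,\pi)$ be a finite symmetric two-player game with relative payoff game $(X,\Delta)$. If $\Delta$ is quasiconcave, then imitation is not subject to a money pump.
   Context: $\pi(x,y)$ is the payoff of the player choosing $x$ against $y$; $\Delta(x,y)=\pi(x,y)-\pi(y,x)$. $\Delta$ is quasiconcave (single-peaked) if there is a total order $\le$ on $X$ such that for each $y\in X$ the function $x\mapsto\Delta(x,y)$ is weakly increasing up to some $k_y\in X$ and weakly decreasing from $k_y$ on. Imitate-the-best: given initial $y_0\in X$ and any opponent sequence $(x_t)_{t\ge0}$, $y_t=x_{t-1}$ if $\Delta(x_{t-1},y_{t-1})>0$ and $y_t=y_{t-1}$ otherwise. Imitation is not subject to a money pump if there is $M\in\mathbb{R}_+$ such that for every $y_0\in X$ and every sequence $(x_t)$, $\limsup_{T\to\infty}\sum_{t=0}^T\Delta(x_t,y_t)\le M$. *)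

theory Defs
  imports "HOL-Analysis.Analysis"
begin

definition rel_payoff :: "('a \<Rightarrow> 'a \<Rightarrow> real) \<Rightarrow> 'a \<Rightarrow> 'a \<Rightarrow> real" where
  "rel_payoff \<pi> x y = \<pi> x y - \<pi> y x"

definition total_order_on :: "'a set \<Rightarrow> ('a \<Rightarrow> 'a \<Rightarrow> bool) \<Rightarrow> bool" where
  "total_order_on X le \<longleftrightarrow>
     (\<forall>x\<in>X. le x x) \<and>
     (\<forall>x\<in>X. \<forall>y\<in>X. le x y \<and> le y x \<longrightarrow> x = y) \<and>
     (\<forall>x\<in>X. \<forall>y\<in>X. \<forall>z\<in>X. le x y \<and> le y z \<longrightarrow> le x z) \<and>
     (\<forall>x\<in>X. \<forall>y\<in>X. le x y \<or> le y x)"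

definition quasiconcave_rel :: "'a set \<Rightarrow> ('a \<Rightarrow> 'a \<Rightarrow> real) \<Rightarrow> bool" where
  "quasiconcave_rel X D \<longleftrightarrow>
     (\<exists>le. total_order_on X le \<and>
        (\<forall>y\<in>X. \<exists>k\<in>X.
           (\<forall>x1\<in>X. \<forall>x2\<in>X. le x1 x2 \<and> le x2 k \<longrightarrow> D x1 y \<le> D x2 y) \<and>
           (\<forall>x1\<in>X. \<forall>x2\<in>X. le k x1 \<and> le x1 x2 \<longrightarrow> D x2 y \<le> D x1 y)))"

fun imitate :: "('a \<Rightarrow> 'a \<Rightarrow> real) \<Rightarrow> 'a \<Rightarrow> (nat \<Rightarrow> 'a) \<Rightarrow> nat \<Rightarrow> 'a" where
  "imitate D y0 xs 0 = y0"
| "imitate D y0 xs (Suc t) =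
     (if D (xs t) (imitate D y0 xs t) > 0 then xs t else imitate D y0 xs t)"

definition no_money_pump :: "'a set \<Rightarrow> ('a \<Rightarrow> 'a \<Rightarrow> real) \<Rightarrow> bool" where
  "no_money_pump X D \<longleftrightarrow>
     (\<exists>M::real. M \<ge> 0 \<and>
        (\<forall>y0\<in>X. \<forall>xs. (\<forall>t. xs t \<in> X) \<longrightarrow>
           limsup (\<lambda>T. ereal (\<Sum>t\<le>T. D (xs t) (imitate D y0 xs t))) \<le> ereal M))"

end

theory Submission
  imports Defs
begin

lemma acyclic_aux:
  fixes D :: "'a \<Rightarrow> 'a \<Rightarrow> real"
  assumes anti: "\<And>a b. D a b = - D b a"
    and tot: "total_order_on X le"
    and sp: "\<forall>y\<in>X. \<exists>k\<in>X.
           (\<forall>x1\<in>X. \<forall>x2\<in>X. le x1 x2 \<and> le x2 k \<longrightarrow> D x1 y \<le> D x2 y) \<and>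
           (\<forall>x1\<in>X. \<forall>x2\<in>X. le k x1 \<and> le x1 x2 \<longrightarrow> D x2 y \<le> D x1 y)"
    and R_def: "R = {(a,b). a\<in>X \<and> b\<in>X \<and> D b a > 0}"
  shows "(a,a) \<notin> R\<^sup>+"
proof
  assume "(a,a) \<in> R\<^sup>+"
  then obtain m where m: "m>0" "(a,a) \<in> R^^m" using trancl_power by blast
  define P where "P n \<longleftrightarrow> n>0 \<and> (\<exists>a. (a,a)\<in>R^^n)" for n
  have "P m" using m P_def by blast
  define n where "n = (LEAST n. P n)"
  have Pn: "P n" unfolding n_def by (rule LeastI[of P m]) fact
  have min: "\<And>k. P k \<Longrightarrow> n \<le> k" unfolding n_def by (rule Least_le)
  obtain a0 where a0: "(a0,a0) \<in> R^^n" and npos: "n>0" using Pn P_def by blast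
  then obtain f where f0: "f 0 = a0" and fn: "f n = a0" and ch: "\<forall>i<n. (f i, f (Suc i)) \<in> R"
    using relpow_fun_conv by metis
  have fX: "\<And>i. i < n \<Longrightarrow> f i \<in> X" using ch R_def by auto
  have D0: "\<And>x. D x x = 0" proof - fix x show "D x x = 0" using anti[of x x] by linarith qed
  have chain: "\<And>i j. i \<le> j \<Longrightarrow> j \<le> n \<Longrightarrow> (f i, f j) \<in> R^^(j-i)"
  proof -
    fix i j :: nat
    show "i \<le> j \<Longrightarrow> j \<le> n \<Longrightarrow> (f i, f j) \<in> R^^(j-i)"
    proof (induction j)
      case 0
      then show ?case by simp
    next
      case (Suc j)
      show ?case
      proof (cases "i = Suc j")
        case True
        then show ?thesis by simp
      next
        case False
        then have "i \<le> j" using Suc.prems by simp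
        then have "(f i, f j) \<in> R^^(j-i)" using Suc by simp
        moreover have "(f j, f (Suc j)) \<in> R" using ch Suc.prems by simp
        ultimately have "(f i, f (Suc j)) \<in> R^^Suc (j-i)" by (rule relpow_Suc_I)
        then show ?thesis using \<open>i \<le> j\<close> by (simp add: Suc_diff_le)
      qed
    qed
  qed
  have chord: "\<And>l m. l<n \<Longrightarrow> m<n \<Longrightarrow> (f l, f m) \<in> R \<Longrightarrow> m = Suc l \<or> (l = n-1 \<and> m = 0)"
  proof -
    fix l m assume lm: "l<n" "m<n" "(f l, f m) \<in> R"
    show "m = Suc l \<or> (l = n-1 \<and> m = 0)"
    proof (cases "m \<le> l")
      case True
      have "(f m, f l) \<in> R^^(l-m)" using chain True lm by simp
      then have "(f m, f m) \<in> R^^Suc (l-m)" using lm(3) by (rule relpow_Suc_I)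
      then have "P (Suc (l-m))" using P_def by blast
      then have "n \<le> Suc (l-m)" by (rule min)
      then show ?thesis using lm True by auto
    next
      case False
      have "(f m, f n) \<in> R^^(n-m)" using chain lm by simp
      then have "(f l, f n) \<in> R^^Suc (n-m)" by (rule relpow_Suc_I2[OF lm(3)])
      moreover have "(f 0, f l) \<in> R^^l" using chain[of 0 l] lm by simp
      ultimately have "(f l, f l) \<in> R^^(Suc (n-m) + l)" using f0 fn relpow_add by fastforce
      then have "P (Suc (n-m) + l)" using P_def by blast
      then have "n \<le> Suc (n-m) + l" by (rule min)
      then show ?thesis using lm False by auto
    qed
  qed
  have fSX: "\<And>j. j<n \<Longrightarrow> f (Suc j) \<in> X" using ch R_def by auto
  have pred: "\<And>j l. j < n \<Longrightarrow> l < n \<Longrightarrow> D (f l) (f (Suc j)) < 0 \<Longrightarrow> f l = f j"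
  proof -
    fix j l assume jl: "j < n" "l < n" "D (f l) (f (Suc j)) < 0"
    define m' where "m' = (if Suc j < n then Suc j else 0)"
    have fm: "f m' = f (Suc j)"
    proof (cases "Suc j < n")
      case True then show ?thesis by (simp add: m'_def)
    next
      case False then have "Suc j = n" using jl by simp
      then show ?thesis using False f0 fn by (simp add: m'_def)
    qed
    have "(f l, f m') \<in> R" using fm R_def fX fSX jl anti[of "f l" "f (Suc j)"] by auto
    then have "m' = Suc l \<or> (l = n-1 \<and> m' = 0)" using chord jl m'_def npos by auto
    moreover have "\<not> Suc j < n \<Longrightarrow> j = n - 1" using jl by simp
    ultimately show "f l = f j" using m'_def jl by (auto split: if_splits)
  qed
  have negj: "\<And>j. j<n \<Longrightarrow> D (f j) (f (Suc j)) < 0"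
  proof -
    fix j assume "j<n"
    then have "(f j, f (Suc j)) \<in> R" using ch by blast
    then have "D (f (Suc j)) (f j) > 0" unfolding R_def by simp
    then show "D (f j) (f (Suc j)) < 0" using anti[of "f j" "f (Suc j)"] by linarith
  qed
  have ext: "\<And>j l l'. j<n \<Longrightarrow> l<n \<Longrightarrow> l'<n \<Longrightarrow> le (f l) (f j) \<Longrightarrow> le (f j) (f l') \<Longrightarrow> f l = f j \<or> f l' = f j"
  proof -
    fix j l l' assume h: "j<n" "l<n" "l'<n" "le (f l) (f j)" "le (f j) (f l')"
    obtain k where kX: "k\<in>X" and inc: "\<forall>x1\<in>X. \<forall>x2\<in>X. le x1 x2 \<and> le x2 k \<longrightarrow> D x1 (f (Suc j)) \<le> D x2 (f (Suc j))"
      and dec: "\<forall>x1\<in>X. \<forall>x2\<in>X. le k x1 \<and> le x1 x2 \<longrightarrow> D x2 (f (Suc j)) \<le> D x1 (f (Suc j))"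
      using sp fSX h(1) by blast
    have "le (f j) k \<or> le k (f j)" using tot kX fX h(1) unfolding total_order_on_def by blast
    then show "f l = f j \<or> f l' = f j"
    proof
      assume "le (f j) k"
      then have "D (f l) (f (Suc j)) \<le> D (f j) (f (Suc j))" using inc h fX by blast
      then have "D (f l) (f (Suc j)) < 0" using negj[OF h(1)] by linarith
      then show ?thesis using pred[OF h(1) h(2)] by blast
    next
      assume "le k (f j)"
      then have "D (f l') (f (Suc j)) \<le> D (f j) (f (Suc j))" using dec h fX by blast
      then have "D (f l') (f (Suc j)) < 0" using negj[OF h(1)] by linarith
      then show ?thesis using pred[OF h(1) h(3)] by blast
    qed
  qed
  have n1: "n \<noteq> 1"
  proof
    assume "n = 1"
    then have "(f 0, f 1) \<in> R" using ch by simp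
    then show False using \<open>n=1\<close> f0 fn R_def D0 by auto
  qed
  have n2: "n \<noteq> 2"
  proof
    assume "n = 2"
    then have "(f 0, f 1) \<in> R" "(f 1, f 2) \<in> R" using ch by (auto simp: numeral_2_eq_2)
    moreover have "f 2 = f 0" using \<open>n=2\<close> f0 fn by simp
    ultimately have "D (f 1) (f 0) > 0" "D (f 0) (f 1) > 0" unfolding R_def by auto
    then show False using anti[of "f 1" "f 0"] by linarith
  qed
  have n3: "n \<ge> 3" using npos n1 n2 by linarith
  have dist: "\<And>i j. i<j \<Longrightarrow> j<n \<Longrightarrow> f i \<noteq> f j"
  proof
    fix i j assume ij: "i<j" "j<n" "f i = f j"
    have "(f i, f j) \<in> R^^(j-i)" using chain[of i j] ij by linarith
    then have "P (j-i)" using P_def ij by auto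
    then have "n \<le> j - i" by (rule min)
    then show False using ij by auto
  qed
  have d01: "f 0 \<noteq> f 1" and d02: "f 0 \<noteq> f 2" and d12: "f 1 \<noteq> f 2" using dist n3 by auto
  have X3: "f 0 \<in> X" "f 1 \<in> X" "f 2 \<in> X" using fX n3 by auto
  have T: "\<forall>x\<in>X. \<forall>y\<in>X. le x y \<or> le y x" and AS: "\<forall>x\<in>X. \<forall>y\<in>X. le x y \<and> le y x \<longrightarrow> x = y"
    using tot unfolding total_order_on_def by blast+
  have l01: "le (f 0) (f 1) \<or> le (f 1) (f 0)" and l02: "le (f 0) (f 2) \<or> le (f 2) (f 0)"
    and l12: "le (f 1) (f 2) \<or> le (f 2) (f 1)" using T X3 by auto
  have z: "0<n" "1<n" "2<n" using n3 by auto
  note e1 = ext[OF z(1) z(2) z(3)] ext[OF z(1) z(3) z(2)]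
  note e2 = ext[OF z(2) z(1) z(3)] ext[OF z(2) z(3) z(1)]
  note e3 = ext[OF z(3) z(1) z(2)] ext[OF z(3) z(2) z(1)]
  show False
  proof (cases "le (f 0) (f 1)")
    case A: True
    show False
    proof (cases "le (f 1) (f 2)")
      case True then show False using A e2(1) d01 d12 by metis
    next
      case False then have B: "le (f 2) (f 1)" using l12 by blast
      show False
      proof (cases "le (f 0) (f 2)")
        case True then show False using B e3(1) d02 d12 by metis
      next
        case False then have "le (f 2) (f 0)" using l02 by blast
        then show False using A e1(2) d02 d01 by metis
      qed
    qed
  next
    case False then have A: "le (f 1) (f 0)" using l01 by blast
    show False
    proof (cases "le (f 2) (f 1)")
      case True then show False using A e2(2) d01 d12 by metis
    next
      case False then have B: "le (f 1) (f 2)" using l12 by blast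
      show False
      proof (cases "le (f 2) (f 0)")
        case True then show False using B e3(2) d02 d12 by metis
      next
        case False then have "le (f 0) (f 2)" using l02 by blast
        then show False using A e1(1) d02 d01 by metis
      qed
    qed
  qed
qed

theorem proposition5:
  fixes X :: "'a set" and \<pi> :: "'a \<Rightarrow> 'a \<Rightarrow> real"
  assumes "finite X" and "X \<noteq> {}"
    and "quasiconcave_rel X (rel_payoff \<pi>)"
  shows "no_money_pump X (rel_payoff \<pi>)"
proof -
  define D where "D = rel_payoff \<pi>"
  have anti: "\<And>a b. D a b = - D b a" unfolding D_def rel_payoff_def by simp
  obtain le where tot: "total_order_on X le" and sp: "\<forall>y\<in>X. \<exists>k\<in>X.
           (\<forall>x1\<in>X. \<forall>x2\<in>X. le x1 x2 \<and> le x2 k \<longrightarrow> D x1 y \<le> D x2 y) \<and>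
           (\<forall>x1\<in>X. \<forall>x2\<in>X. le k x1 \<and> le x1 x2 \<longrightarrow> D x2 y \<le> D x1 y)"
    using assms(3) unfolding quasiconcave_rel_def D_def by blast
  define R where "R = {(a,b). a\<in>X \<and> b\<in>X \<and> D b a > 0}"
  have acyc: "\<And>a. (a,a) \<notin> R\<^sup>+" using acyclic_aux[OF anti tot sp R_def] by blast
  have RX: "R \<subseteq> X \<times> X" unfolding R_def by auto
  then have RtX: "R\<^sup>+ \<subseteq> X \<times> X" by (rule trancl_subset_Sigma)
  define r where "r a = card {c. (a,c) \<in> R\<^sup>+}" for a
  have fin: "\<And>a. finite {c. (a,c) \<in> R\<^sup>+}" by (rule finite_subset[OF _ assms(1)]) (use RtX in auto)
  have rle: "\<And>a. r a \<le> card X" unfolding r_def using RtX assms(1)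
    by (intro card_mono) auto
  have rdec: "\<And>a b. (a,b) \<in> R \<Longrightarrow> r b < r a"
  proof -
    fix a b assume ab: "(a,b) \<in> R"
    have "{c. (b,c) \<in> R\<^sup>+} \<subset> {c. (a,c) \<in> R\<^sup>+}"
      using ab acyc[of b] trancl_into_trancl2[of a b R] by auto
    then show "r b < r a" unfolding r_def using fin by (rule psubset_card_mono[rotated])
  qed
  define B where "B = (\<Sum>p\<in>X\<times>X. \<bar>D (fst p) (snd p)\<bar>)"
  have B0: "B \<ge> 0" unfolding B_def by (simp add: sum_nonneg)
  have Bge: "\<And>a b. a\<in>X \<Longrightarrow> b\<in>X \<Longrightarrow> D a b \<le> B"
  proof -
    fix a b assume "a\<in>X" "b\<in>X"
    then have "\<bar>D (fst (a,b)) (snd (a,b))\<bar> \<le> B" unfolding B_def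
      using assms(1) by (intro member_le_sum) auto
    then show "D a b \<le> B" by simp
  qed
  define M where "M = B * real (card X)"
  show ?thesis unfolding no_money_pump_def D_def[symmetric]
  proof (intro exI conjI ballI allI impI)
    show "0 \<le> M" unfolding M_def using B0 by simp
    fix y0 and xs :: "nat \<Rightarrow> 'a" assume y0: "y0 \<in> X" and xsX: "\<forall>t. xs t \<in> X"
    define y where "y = imitate D y0 xs"
    have yX: "\<And>t. y t \<in> X"
    proof -
      fix t show "y t \<in> X" unfolding y_def using y0 xsX by (induction t) auto
    qed
    have step: "\<And>t. D (xs t) (y t) \<le> B * (real (r (y t)) - real (r (y (Suc t))))"
    proof -
      fix t
      show "D (xs t) (y t) \<le> B * (real (r (y t)) - real (r (y (Suc t))))"
      proof (cases "D (xs t) (y t) > 0")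
        case True
        then have ys: "y (Suc t) = xs t" unfolding y_def by simp
        have "(y t, xs t) \<in> R" using True yX xsX R_def by auto
        then have "r (xs t) < r (y t)" by (rule rdec)
        then have "1 \<le> real (r (y t)) - real (r (y (Suc t)))" using ys by simp
        then have "B * 1 \<le> B * (real (r (y t)) - real (r (y (Suc t))))" using B0
          by (rule mult_left_mono)
        moreover have "D (xs t) (y t) \<le> B" using Bge xsX yX by blast
        ultimately show ?thesis by simp
      next
        case False
        then have "y (Suc t) = y t" unfolding y_def by simp
        then show ?thesis using False by simp
      qed
    qed
    have sum: "\<And>T. (\<Sum>t\<le>T. D (xs t) (y t)) \<le> B * (real (r y0) - real (r (y (Suc T))))"
    proof -
      fix T show "(\<Sum>t\<le>T. D (xs t) (y t)) \<le> B * (real (r y0) - real (r (y (Suc T))))"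
      proof (induction T)
        case 0
        then show ?case using step[of 0] by (simp add: y_def)
      next
        case (Suc T)
        have "(\<Sum>t\<le>Suc T. D (xs t) (y t)) = (\<Sum>t\<le>T. D (xs t) (y t)) + D (xs (Suc T)) (y (Suc T))"
          by simp
        also have "\<dots> \<le> B * (real (r y0) - real (r (y (Suc T)))) + B * (real (r (y (Suc T))) - real (r (y (Suc (Suc T)))))"
          using Suc.IH step[of "Suc T"] by linarith
        also have "\<dots> = B * (real (r y0) - real (r (y (Suc (Suc T)))))" by (simp add: algebra_simps)
        finally show ?case .
      qed
    qed
    have bnd: "\<And>T. (\<Sum>t\<le>T. D (xs t) (y t)) \<le> M"
    proof -
      fix T
      have "B * (real (r y0) - real (r (y (Suc T)))) \<le> B * real (card X)"
        using B0 rle[of y0] by (intro mult_left_mono) auto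
      then show "(\<Sum>t\<le>T. D (xs t) (y t)) \<le> M" using sum[of T] unfolding M_def by linarith
    qed
    show "limsup (\<lambda>T. ereal (\<Sum>t\<le>T. D (xs t) (imitate D y0 xs t))) \<le> ereal M"
      using bnd unfolding y_def by (intro Limsup_bounded always_eventually) auto
  qed
qed

end
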